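(* For $w\in\Sigma^*$ the following are equivalent: (i) $w$ contains no letter square; (ii) every scattered factor $u$ of $w$ with $|C(w,u)|=1$ has exactly one embedding in $w$.
   Context: A letter square of $w$ is a factor $\mathtt{a}\mathtt{a}$ of $w$ for some letter $\mathtt{a}\in\Sigma$. An embedding of $u$ in $w$ is a map $e:\{1,\dots,|u|\}\to\{1,\dots,|w|\}$ with $e(1)<\dots<e(|u|)$ and $u[i]=w[e(i)]$. The shuffle $\mathrm{Sh}(u,v)$ is the set of words of length $|u|+|v|$ admitting an embedding of $u$ and one of $v$ with disjoint images covering all positions, and $C(w,u)=\{v\in\Sigma^{|w|-|u|}: w\in\mathrm{Sh}(u,v)\}$. *)

theory Defs
  imports Main "HOL-Library.Sublist"
begin

text \<open>Words are lists over the alphabet type 'a. Positions are 0-indexed.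
An embedding of u in w is represented by the list of its images
e = [e(1),...,e(|u|)] (shifted to 0-based positions).\<close>

definition is_embedding :: "'a list \<Rightarrow> 'a list \<Rightarrow> nat list \<Rightarrow> bool" where
  "is_embedding u w e \<longleftrightarrow>
     length e = length u \<and> sorted_wrt (<) e \<and>
     (\<forall>i<length u. e ! i < length w \<and> u ! i = w ! (e ! i))"

definition embeddings :: "'a list \<Rightarrow> 'a list \<Rightarrow> nat list set" where
  "embeddings u w = {e. is_embedding u w e}"

definition scattered_factor :: "'a list \<Rightarrow> 'a list \<Rightarrow> bool" where
  "scattered_factor u w \<longleftrightarrow> embeddings u w \<noteq> {}"

definition shuffle_set :: "'a list \<Rightarrow> 'a list \<Rightarrow> 'a list set" where
  "shuffle_set u v = {w. length w = length u + length v \<and>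
     (\<exists>e f. is_embedding u w e \<and> is_embedding v w f \<and>
            set e \<inter> set f = {} \<and> set e \<union> set f = {..<length w})}"

definition Cset :: "'a list \<Rightarrow> 'a list \<Rightarrow> 'a list set" where
  "Cset w u = {v. length v = length w - length u \<and> w \<in> shuffle_set u v}"

definition has_letter_square :: "'a list \<Rightarrow> bool" where
  "has_letter_square w \<longleftrightarrow> (\<exists>a. sublist [a, a] w)"

end

theory Submission
  imports Defs "HOL-Library.Multiset"
begin

definition comp :: "'a list \<Rightarrow> nat list \<Rightarrow> 'a list" where
  "comp w e = map (nth w) (filter (\<lambda>i. i \<notin> set e) [0..<length w])"

lemma emb_distinct: "is_embedding u w e \<Longrightarrow> distinct e"
  unfolding is_embedding_def by (auto simp: strict_sorted_iff)

lemma emb_set: "is_embedding u w e \<Longrightarrow> set e \<subseteq> {..<length w}"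
  unfolding is_embedding_def by (auto simp: in_set_conv_nth)

lemma emb_map: "is_embedding u w e \<Longrightarrow> u = map (nth w) e"
  unfolding is_embedding_def by (auto intro: nth_equalityI)

lemma comp_in_Cset:
  assumes "is_embedding u w e"
  shows "comp w e \<in> Cset w u"
proof -
  define f where "f = filter (\<lambda>i. i \<notin> set e) [0..<length w]"
  have df: "distinct f" unfolding f_def by simp
  have sf: "set f = {..<length w} - set e" unfolding f_def by auto
  have de: "distinct e" using emb_distinct[OF assms] .
  have se: "set e \<subseteq> {..<length w}" using emb_set[OF assms] .
  have le: "length e = length u" using assms unfolding is_embedding_def by simp
  have "length f = card (set f)" using distinct_card[OF df] by simp
  also have "\<dots> = length w - length u" unfolding sf using se de le
    by (simp add: card_Diff_subset finite_subset distinct_card)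
  finally have lf: "length f = length w - length u" .
  have ef: "is_embedding (comp w e) w f"
    unfolding is_embedding_def comp_def f_def[symmetric]
  proof (intro conjI allI impI)
    show "sorted_wrt (<) f" unfolding f_def by (simp add: sorted_wrt_filter)
  next
    fix i assume "i < length (map ((!) w) f)"
    then have "f ! i \<in> set f" by simp
    then show "f ! i < length w" unfolding sf by auto
  qed (auto)
  have "card (set e) \<le> card {..<length w}" using se by (intro card_mono) auto
  then have "length u \<le> length w" using de le by (simp add: distinct_card)
  then have "length w = length u + length (comp w e)"
    using lf unfolding comp_def f_def[symmetric] by simp
  moreover have "set e \<inter> set f = {}" "set e \<union> set f = {..<length w}" using sf se by auto
  ultimately show ?thesis unfolding Cset_def shuffle_set_def
    using assms ef lf unfolding comp_def f_def[symmetric] by auto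
qed

lemma comp_key:
  assumes "p + 1 < length w" "p \<notin> set e" "p \<in> set g" "p + 1 \<notin> set g"
    and "\<forall>x<p. x \<in> set e \<longleftrightarrow> x \<in> set g"
    and "comp w e = comp w g"
  shows "w ! p = w ! (p + 1)"
proof -
  have up0: "[0..<length w] = [0..<p] @ [p..<length w]"
    using upt_add_eq_append[of 0 p "length w - p"] assms(1) by simp
  have up1: "[p..<length w] = p # (p+1) # [p+2..<length w]"
    using assms(1) by (simp add: upt_conv_Cons)
  have up: "[0..<length w] = [0..<p] @ p # (p+1) # [p+2..<length w]"
    using up0 up1 by simp
  have A: "filter (\<lambda>i. i \<notin> set e) [0..<p] = filter (\<lambda>i. i \<notin> set g) [0..<p]"
    using assms(5) by (intro filter_cong) auto
  have "comp w e = map (nth w) (filter (\<lambda>i. i \<notin> set g) [0..<p]) @ w ! p # map (nth w) (filter (\<lambda>i. i \<notin> set e) ((p+1) # [p+2..<length w]))"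
    unfolding comp_def up using assms(2) A by simp
  moreover have "comp w g = map (nth w) (filter (\<lambda>i. i \<notin> set g) [0..<p]) @ w ! (p+1) # map (nth w) (filter (\<lambda>i. i \<notin> set g) [p+2..<length w])"
    unfolding comp_def up using assms(3,4) by simp
  ultimately show ?thesis using assms(6) by simp
qed

lemma square_at:
  assumes "p + 1 < length w" "w ! p = w ! (p + 1)"
  shows "has_letter_square w"
proof -
  have d1: "drop p w = w ! p # drop (Suc p) w" using assms(1) by (simp add: Cons_nth_drop_Suc)
  have d2: "drop (Suc p) w = w ! (p+1) # drop (p+2) w" using assms(1) by (simp add: Cons_nth_drop_Suc)
  have "w = take p w @ drop p w" by simp
  also have "\<dots> = take p w @ [w ! p, w ! (p+1)] @ drop (p+2) w" using d1 d2 by simp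
  finally have "w = take p w @ [w ! p, w ! (p+1)] @ drop (p+2) w" .
  then show ?thesis unfolding has_letter_square_def sublist_def using assms(2) by metis
qed

lemma two_emb_square:
  assumes e: "is_embedding u w e" and e': "is_embedding u w e'"
    and k: "k < length u" "e' ! k < e ! k" "\<forall>i<k. e ! i = e' ! i"
    and C: "\<forall>x. is_embedding u w x \<longrightarrow> comp w x = comp w e"
  shows "has_letter_square w"
proof -
  define p where "p = e' ! k"
  define q where "q = e ! k"
  define g where "g = e[k := p]"
  have le: "length e = length u" and se: "sorted_wrt (<) e" and ne: "\<forall>i<length u. e ! i < length w \<and> u ! i = w ! (e ! i)"
    using e unfolding is_embedding_def by auto
  have le': "length e' = length u" and se': "sorted_wrt (<) e'" and ne': "\<forall>i<length u. e' ! i < length w \<and> u ! i = w ! (e' ! i)"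
    using e' unfolding is_embedding_def by auto
  have lt: "\<And>i j. i < j \<Longrightarrow> j < length u \<Longrightarrow> e ! i < e ! j"
    using se le by (simp add: sorted_wrt_iff_nth_less)
  have lt': "\<And>i j. i < j \<Longrightarrow> j < length u \<Longrightarrow> e' ! i < e' ! j"
    using se' le' by (simp add: sorted_wrt_iff_nth_less)
  have pq: "p < q" using k unfolding p_def q_def by simp
  have qn: "q < length w" using ne k unfolding q_def by auto
  have pn: "p < length w" and up: "u ! k = w ! p" using ne' k unfolding p_def by auto
  have e_before: "\<And>i. i < k \<Longrightarrow> e ! i < p"
  proof -
    fix i assume i: "i < k"
    have "e' ! i < e' ! k" by (rule lt'[OF i k(1)])
    then show "e ! i < p" using k(3) i unfolding p_def by simp
  qed
  have e_after: "\<And>i. k < i \<Longrightarrow> i < length u \<Longrightarrow> q < e ! i"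
    unfolding q_def by (rule lt)
  have gn: "\<And>i. i < length u \<Longrightarrow> g ! i = (if i = k then p else e ! i)"
    unfolding g_def using le by simp
  have lg: "length g = length u" unfolding g_def using le by simp
  have p_notin: "p \<notin> set e"
  proof
    assume "p \<in> set e"
    then obtain i where i: "i < length u" "e ! i = p" using le by (auto simp: in_set_conv_nth)
    show False
    proof (cases rule: linorder_cases[of i k])
      case less then show ?thesis using e_before[of i] i by simp
    next
      case equal then show ?thesis using i pq unfolding q_def by simp
    next
      case greater then show ?thesis using e_after[of i] i pq by simp
    qed
  qed
  have p_in: "p \<in> set g" using gn[OF k(1)] lg k(1) by (metis in_set_conv_nth)
  have g_small: "\<And>i. i < k \<Longrightarrow> g ! i < p"
  proof -
    fix i assume i: "i < k"
    then have "g ! i = e ! i" using gn[of i] k(1) by simp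
    then show "g ! i < p" using e_before[OF i] by simp
  qed
  have g_big: "\<And>i. i < length u \<Longrightarrow> k < i \<Longrightarrow> q < g ! i"
  proof -
    fix i assume i: "i < length u" "k < i"
    then have "g ! i = e ! i" using gn[of i] by simp
    then show "q < g ! i" using e_after[OF i(2) i(1)] by simp
  qed
  have p1_notin: "p + 1 \<notin> set g"
  proof
    assume "p + 1 \<in> set g"
    then obtain i where i: "i < length u" "g ! i = p + 1" using lg by (auto simp: in_set_conv_nth)
    show False
    proof (cases rule: linorder_cases[of i k])
      case less then show ?thesis using g_small[of i] i by simp
    next
      case equal then show ?thesis using i gn[of i] by simp
    next
      case greater then show ?thesis using g_big[of i] i pq by simp
    qed
  qed
  have agree: "\<forall>x<p. x \<in> set e \<longleftrightarrow> x \<in> set g"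
  proof (intro allI impI iffI)
    fix x assume x: "x < p" "x \<in> set e"
    then obtain i where i: "i < length u" "e ! i = x" using le by (auto simp: in_set_conv_nth)
    have ik: "i < k"
    proof (rule ccontr)
      assume "\<not> i < k"
      then consider "i = k" | "k < i" by linarith
      then show False
      proof cases
        case 1 then show ?thesis using x i pq unfolding q_def by simp
      next
        case 2 then show ?thesis using e_after[of i] x i pq by simp
      qed
    qed
    then have "g ! i = x" using gn[of i] i by simp
    then show "x \<in> set g" using i lg by (metis in_set_conv_nth)
  next
    fix x assume x: "x < p" "x \<in> set g"
    then obtain i where i: "i < length u" "g ! i = x" using lg by (auto simp: in_set_conv_nth)
    have ik: "i < k"
    proof (rule ccontr)
      assume "\<not> i < k"
      then consider "i = k" | "k < i" by linarith
      then show False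
      proof cases
        case 1 then show ?thesis using x i gn[of i] by simp
      next
        case 2 then show ?thesis using g_big[of i] x i pq by simp
      qed
    qed
    then have "e ! i = x" using gn[of i] i by simp
    then show "x \<in> set e" using i le by (metis in_set_conv_nth)
  qed
  have gemb: "is_embedding u w g"
    unfolding is_embedding_def
  proof (intro conjI allI impI)
    show "length g = length u" by (rule lg)
    show "sorted_wrt (<) g"
      unfolding sorted_wrt_iff_nth_less lg
    proof (intro allI impI)
      fix i j assume ij: "i < j" "j < length u"
      then have iu: "i < length u" by simp
      show "g ! i < g ! j"
      proof (cases rule: linorder_cases[of j k])
        case less
        then have "g ! i = e ! i" "g ! j = e ! j" using gn[OF iu] gn[OF ij(2)] ij by auto
        then show ?thesis using lt[OF ij] by simp
      next
        case equal
        then show ?thesis using g_small[of i] ij gn[OF ij(2)] by simp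
      next
        case greater
        show ?thesis
        proof (cases rule: linorder_cases[of i k])
          case less then show ?thesis using g_small[OF less] pq g_big[OF ij(2) greater] by simp
        next
          case equal then show ?thesis using gn[OF iu] pq g_big[OF ij(2) greater] by simp
        next
          case g2: greater
          then have "g ! i = e ! i" "g ! j = e ! j" using gn[OF iu] gn[OF ij(2)] ij by auto
          then show ?thesis using lt[OF ij] by simp
        qed
      qed
    qed
  next
    fix i assume i: "i < length u"
    show "g ! i < length w" "u ! i = w ! (g ! i)"
      using gn[OF i] ne i pn up by auto
  qed
  have C': "comp w e = comp w g" using C gemb by simp
  have "w ! p = w ! (p + 1)"
    using comp_key[of p w e g] pq qn p_notin p_in p1_notin agree C' by simp
  then show ?thesis using square_at[of p w] pq qn by simp
qed

lemma distinct_emb_square: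
  assumes e: "is_embedding u w e" and e': "is_embedding u w e'" and ne: "e \<noteq> e'"
    and C: "\<forall>x y. is_embedding u w x \<longrightarrow> is_embedding u w y \<longrightarrow> comp w x = comp w y"
  shows "has_letter_square w"
proof -
  have le: "length e = length u" "length e' = length u" using e e' unfolding is_embedding_def by auto
  have ex: "\<exists>i. i < length u \<and> e ! i \<noteq> e' ! i"
    using ne le nth_equalityI by metis
  define k where "k = (LEAST i. i < length u \<and> e ! i \<noteq> e' ! i)"
  have k: "k < length u" "e ! k \<noteq> e' ! k" using LeastI_ex[OF ex] unfolding k_def by auto
  have before: "\<forall>i<k. e ! i = e' ! i"
    using not_less_Least k(1) unfolding k_def by fastforce
  show ?thesis
  proof (cases "e' ! k < e ! k")
    case True
    show ?thesis by (rule two_emb_square[OF e e' k(1) True before]) (use C e in blast)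
  next
    case False
    then have "e ! k < e' ! k" using k(2) by simp
    moreover have "\<forall>i<k. e' ! i = e ! i" using before by simp
    ultimately show ?thesis by (intro two_emb_square[OF e' e k(1)]) (use C e' in blast)+
  qed
qed

lemma shuffle_mset:
  assumes "w \<in> shuffle_set u v"
  shows "mset w = mset u + mset v"
proof -
  obtain e f where e: "is_embedding u w e" and f: "is_embedding v w f"
    and d: "set e \<inter> set f = {}" and un: "set e \<union> set f = {..<length w}"
    using assms unfolding shuffle_set_def by blast
  have "mset u = image_mset (nth w) (mset e)" using emb_map[OF e] by simp
  moreover have "mset v = image_mset (nth w) (mset f)" using emb_map[OF f] by simp
  moreover have "mset e + mset f = mset [0..<length w]"
    using mset_set_Union[of "set e" "set f"] d un emb_distinct[OF e] emb_distinct[OF f]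
    by (simp add: mset_set_set lessThan_atLeast0)
  moreover have "mset w = image_mset (nth w) (mset [0..<length w])"
    by (metis map_nth mset_map)
  ultimately show ?thesis by (metis image_mset_union)
qed

lemma del_emb:
  assumes "j < length w"
  shows "is_embedding (take j w @ drop (Suc j) w) w ([0..<j] @ [Suc j..<length w])"
  unfolding is_embedding_def
proof (intro conjI allI impI)
  show "length ([0..<j] @ [Suc j..<length w]) = length (take j w @ drop (Suc j) w)"
    using assms by simp
  show "sorted_wrt (<) ([0..<j] @ [Suc j..<length w])"
    by (auto simp: sorted_wrt_append)
next
  fix i assume i: "i < length (take j w @ drop (Suc j) w)"
  show "([0..<j] @ [Suc j..<length w]) ! i < length w"
       "(take j w @ drop (Suc j) w) ! i = w ! (([0..<j] @ [Suc j..<length w]) ! i)"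
    using i assms by (auto simp: nth_append min_def)
qed

theorem proposition30:
  fixes w :: "'a list"
  shows "\<not> has_letter_square w \<longleftrightarrow>
         (\<forall>u. scattered_factor u w \<and> card (Cset w u) = 1 \<longrightarrow> card (embeddings u w) = 1)"
proof
  assume ns: "\<not> has_letter_square w"
  show "\<forall>u. scattered_factor u w \<and> card (Cset w u) = 1 \<longrightarrow> card (embeddings u w) = 1"
  proof (intro allI impI)
    fix u assume h: "scattered_factor u w \<and> card (Cset w u) = 1"
    then have "card (Cset w u) = 1" by (rule conjunct2)
    then obtain c where Cc: "Cset w u = {c}" by (rule card_1_singletonE)
    have "embeddings u w \<noteq> {}" using h unfolding scattered_factor_def by (rule conjunct1)
    then obtain e0 where e0: "e0 \<in> embeddings u w" by blast
    have e0': "is_embedding u w e0" using e0 unfolding embeddings_def by simp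
    have C: "\<forall>x y. is_embedding u w x \<longrightarrow> is_embedding u w y \<longrightarrow> comp w x = comp w y"
    proof (intro allI impI)
      fix x y assume xy: "is_embedding u w x" "is_embedding u w y"
      have "comp w x \<in> Cset w u" "comp w y \<in> Cset w u" using comp_in_Cset[OF xy(1)] comp_in_Cset[OF xy(2)] .
      then have "comp w x \<in> {c}" "comp w y \<in> {c}" unfolding Cc .
      then show "comp w x = comp w y" by simp
    qed
    have "embeddings u w = {e0}"
    proof (rule set_eqI, rule iffI)
      fix x assume "x \<in> embeddings u w"
      then have x: "is_embedding u w x" unfolding embeddings_def by simp
      show "x \<in> {e0}"
      proof (rule ccontr)
        assume "x \<notin> {e0}"
        then have "x \<noteq> e0" by simp
        from distinct_emb_square[OF x e0' this C] ns show False by simp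
      qed
    next
      fix x assume "x \<in> {e0}"
      then show "x \<in> embeddings u w" using e0 by simp
    qed
    then show "card (embeddings u w) = 1" by simp
  qed
next
  assume H: "\<forall>u. scattered_factor u w \<and> card (Cset w u) = 1 \<longrightarrow> card (embeddings u w) = 1"
  show "\<not> has_letter_square w"
  proof
    assume "has_letter_square w"
    then obtain a xs ys where w: "w = xs @ [a, a] @ ys"
      unfolding has_letter_square_def sublist_def by blast
    define p where "p = length xs"
    define u where "u = xs @ a # ys"
    define e1 where "e1 = [0..<p] @ [Suc p..<length w]"
    define e2 where "e2 = [0..<Suc p] @ [Suc (Suc p)..<length w]"
    have u1: "take p w @ drop (Suc p) w = u" unfolding w u_def p_def by simp
    have u2: "take (Suc p) w @ drop (Suc (Suc p)) w = u" unfolding w u_def p_def by simp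
    have E1: "is_embedding u w e1" using del_emb[of p w] u1 unfolding e1_def p_def w by simp
    have E2: "is_embedding u w e2" using del_emb[of "Suc p" w] u2 unfolding e2_def p_def w by simp
    have ne: "e1 \<noteq> e2"
    proof
      assume "e1 = e2"
      moreover have "p \<in> set e2" unfolding e2_def by simp
      moreover have "p \<notin> set e1" unfolding e1_def by simp
      ultimately show False by simp
    qed
    have lw: "length w = Suc (length u)" unfolding w u_def by simp
    have wp: "w ! p = a" unfolding w p_def by simp
    have pw: "p < length w" unfolding w p_def by simp
    have a_in: "[a] \<in> Cset w u"
    proof -
      have f: "is_embedding [a] w [p]" unfolding is_embedding_def using wp pw by simp
      have s1: "set e1 \<inter> set [p] = {}" unfolding e1_def by simp
      have s2: "set e1 \<union> set [p] = {..<length w}" unfolding e1_def using pw by auto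
      have "w \<in> shuffle_set u [a]" unfolding shuffle_set_def
        using lw E1 f s1 s2 by (intro CollectI conjI exI[of _ e1] exI[of _ "[p]"]) simp_all
      then show "[a] \<in> Cset w u" unfolding Cset_def using lw by simp
    qed
    have only_a: "v = [a]" if v: "v \<in> Cset w u" for v
    proof -
      have "w \<in> shuffle_set u v" using v unfolding Cset_def by simp
      then have "mset w = mset u + mset v" by (rule shuffle_mset)
      then have mv: "mset v = {#a#}" unfolding w u_def by simp
      then show "v = [a]" by simp
    qed
    have Cs: "Cset w u = {[a]}" using a_in only_a by blast
    have sf: "scattered_factor u w" unfolding scattered_factor_def embeddings_def using E1 by blast
    have c1: "card (Cset w u) = 1" using Cs by simp
    have "card (embeddings u w) = 1" using H sf c1 by simp
    then obtain x where ex: "embeddings u w = {x}" by (rule card_1_singletonE)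
    have "e1 \<in> embeddings u w" "e2 \<in> embeddings u w" using E1 E2 unfolding embeddings_def by simp_all
    then show False using ex ne by simp
  qed
qed

end
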